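(* Let $k\ge1$ and let $\Sigma_k=\{(f,g)\in P_k\times P_k: f\le g\}$. Define $r(f,g)=(f,f)$, $s(f,g)=(g,g)$, $(f,g)(g,h)=(f,h)$, and $d(f,g)=h(g)-h(f)$. Then $d$ takes values in $\mathbb{N}^k$, and with these structure maps $(\Sigma_k,d)$ is a $k$-graph; moreover $d$ maps $\Sigma_k$ onto $\{n\in\mathbb{N}^k: n\le\mathbf{1}_k\}$.
   Context: A function $f:\{0,\dots,k\}\to\{0,\dots,k\}$ is a $k$-placing if $f(j)=|\{i: f(i)<f(j)\}|$ for all $j\le k$; $P_k$ is the set of $k$-placings, ordered by $f\le g$ iff $f(i)\le g(i)$ for all $i$. The height function $h:P_k\to\mathbb{N}^k$ is given by $h(f)_i=1$ if $f^{-1}(i)\neq\emptyset$ and $h(f)_i=0$ otherwise, for $1\le i\le k$. $\mathbf{1}_k=(1,\dots,1)\in\mathbb{N}^k$. A $k$-graph is a countable small category with a functor $d$ to $\mathbb{N}^k$ such that, writing $\Lambda^n=d^{-1}(n)$, composition is a bijection from composable pairs in $\Lambda^m\times\Lambda^n$ onto $\Lambda^{m+n}$. *)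

theory Defs
  imports Main "HOL-Library.Countable_Set"
begin

text \<open>Elements of N^k are represented as functions nat => nat supported on {1..k}
  (coordinate i is the value at i, for 1 <= i <= k).\<close>
definition nvec :: "nat \<Rightarrow> (nat \<Rightarrow> nat) \<Rightarrow> bool" where
  "nvec k n \<longleftrightarrow> (\<forall>i. (i < 1 \<or> k < i) \<longrightarrow> n i = 0)"

text \<open>k-placings: functions {0..k} -> {0..k}, represented extensionally
  (value 0 outside {0..k}).\<close>
definition placing :: "nat \<Rightarrow> (nat \<Rightarrow> nat) \<Rightarrow> bool" where
  "placing k f \<longleftrightarrow>
     (\<forall>j\<le>k. f j \<le> k \<and> f j = card {i. i \<le> k \<and> f i < f j}) \<and> (\<forall>j>k. f j = 0)"

definition Pk :: "nat \<Rightarrow> (nat \<Rightarrow> nat) set" where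
  "Pk k = {f. placing k f}"

definition ple :: "nat \<Rightarrow> (nat \<Rightarrow> nat) \<Rightarrow> (nat \<Rightarrow> nat) \<Rightarrow> bool" where
  "ple k f g \<longleftrightarrow> (\<forall>i\<le>k. f i \<le> g i)"

definition height :: "nat \<Rightarrow> (nat \<Rightarrow> nat) \<Rightarrow> nat \<Rightarrow> nat" where
  "height k f i = (if 1 \<le> i \<and> i \<le> k \<and> (\<exists>j\<le>k. f j = i) then 1 else 0)"

definition Sigma_k :: "nat \<Rightarrow> ((nat \<Rightarrow> nat) \<times> (nat \<Rightarrow> nat)) set" where
  "Sigma_k k = {(f, g). f \<in> Pk k \<and> g \<in> Pk k \<and> ple k f g}"

definition sig_r :: "('a \<times> 'a) \<Rightarrow> ('a \<times> 'a)" where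
  "sig_r a = (fst a, fst a)"

definition sig_s :: "('a \<times> 'a) \<Rightarrow> ('a \<times> 'a)" where
  "sig_s a = (snd a, snd a)"

text \<open>Composition (f,g)(g,h) = (f,h); only used on composable pairs.\<close>
definition sig_comp :: "('a \<times> 'a) \<Rightarrow> ('a \<times> 'a) \<Rightarrow> ('a \<times> 'a)" where
  "sig_comp a b = (fst a, snd b)"

text \<open>d(f,g) = h(g) - h(f) (natural subtraction; the theorem separately asserts
  that h(f) <= h(g) componentwise, so no truncation occurs).\<close>
definition sig_d :: "nat \<Rightarrow> ((nat \<Rightarrow> nat) \<times> (nat \<Rightarrow> nat)) \<Rightarrow> nat \<Rightarrow> nat" where
  "sig_d k a = (\<lambda>i. height k (snd a) i - height k (fst a) i)"

text \<open>A small category given by its set of morphisms M, with range r, source s,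
  composition cmp (cmp a b defined when s a = r b); objects are identified with
  identity morphisms.\<close>
definition is_category ::
  "'m set \<Rightarrow> ('m \<Rightarrow> 'm) \<Rightarrow> ('m \<Rightarrow> 'm) \<Rightarrow> ('m \<Rightarrow> 'm \<Rightarrow> 'm) \<Rightarrow> bool" where
  "is_category M r s cmp \<longleftrightarrow>
     (\<forall>a\<in>M. r a \<in> M \<and> s a \<in> M \<and>
        r (r a) = r a \<and> s (r a) = r a \<and> r (s a) = s a \<and> s (s a) = s a \<and>
        cmp (r a) a = a \<and> cmp a (s a) = a) \<and>
     (\<forall>a\<in>M. \<forall>b\<in>M. s a = r b \<longrightarrow>
        cmp a b \<in> M \<and> r (cmp a b) = r a \<and> s (cmp a b) = s b) \<and>
     (\<forall>a\<in>M. \<forall>b\<in>M. \<forall>c\<in>M. s a = r b \<and> s b = r c \<longrightarrow>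
        cmp (cmp a b) c = cmp a (cmp b c))"

definition is_k_graph ::
  "nat \<Rightarrow> 'm set \<Rightarrow> ('m \<Rightarrow> 'm) \<Rightarrow> ('m \<Rightarrow> 'm) \<Rightarrow> ('m \<Rightarrow> 'm \<Rightarrow> 'm)
     \<Rightarrow> ('m \<Rightarrow> nat \<Rightarrow> nat) \<Rightarrow> bool" where
  "is_k_graph k M r s cmp d \<longleftrightarrow>
     countable M \<and> is_category M r s cmp \<and>
     (\<forall>a\<in>M. nvec k (d a)) \<and>
     (\<forall>a\<in>M. r a = a \<longrightarrow> d a = (\<lambda>i. 0)) \<and>
     (\<forall>a\<in>M. \<forall>b\<in>M. s a = r b \<longrightarrow> d (cmp a b) = (\<lambda>i. d a i + d b i)) \<and>
     (\<forall>m n. nvec k m \<longrightarrow> nvec k n \<longrightarrow>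
        (\<forall>l\<in>M. d l = (\<lambda>i. m i + n i) \<longrightarrow>
           (\<exists>!p. fst p \<in> M \<and> snd p \<in> M \<and> s (fst p) = r (snd p) \<and>
                 d (fst p) = m \<and> d (snd p) = n \<and> cmp (fst p) (snd p) = l)))"

end

theory Submission imports Defs begin

lemma imgE: assumes "x \<in> f ` {..k}" obtains j where "j \<le> k" "f j = x"
  using assms by auto

lemma imgI: "j \<le> k \<Longrightarrow> f j = x \<Longrightarrow> x \<in> f ` {..(k::nat)}"
  by auto

lemma placingD:
  assumes p: "placing k f" and j: "j \<le> k"
  shows "f j \<le> k" "card {i. i \<le> k \<and> f i < f j} = f j"
proof -
  have A: "\<forall>j\<le>k. f j \<le> k \<and> f j = card {i. i \<le> k \<and> f i < f j}"
    using p unfolding placing_def by (rule conjunct1)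
  have B: "j \<le> k \<longrightarrow> f j \<le> k \<and> f j = card {i. i \<le> k \<and> f i < f j}" using A by (rule spec)
  have C: "f j \<le> k \<and> f j = card {i. i \<le> k \<and> f i < f j}" using mp[OF B j] .
  show "f j \<le> k" using C by (rule conjunct1)
  show "card {i. i \<le> k \<and> f i < f j} = f j" using C by (rule sym[OF conjunct2])
qed

lemma placingD2:
  assumes p: "placing k f" and j: "k < j" shows "f j = 0"
proof -
  have A: "\<forall>j>k. f j = 0" using p unfolding placing_def by (rule conjunct2)
  have B: "k < j \<longrightarrow> f j = 0" using A by (rule spec)
  show ?thesis using mp[OF B j] .
qed

lemma placingI:
  assumes a1: "\<And>j. j \<le> k \<Longrightarrow> f j \<le> k" and a2: "\<And>j. j \<le> k \<Longrightarrow> card {i. i \<le> k \<and> f i < f j} = f j"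
    and a3: "\<And>j. k < j \<Longrightarrow> f j = 0"
  shows "placing k f"
  unfolding placing_def
proof (intro conjI allI impI)
  fix j assume j: "j \<le> k"
  show "f j \<le> k" using a1[OF j] .
  show "f j = card {i. i \<le> k \<and> f i < f j}" using a2[OF j] by (rule sym)
next
  fix j :: nat assume "k < j" then show "f j = 0" by (rule a3)
qed

lemma L1:
  assumes pf: "placing k f" shows "0 \<in> f ` {..k}"
proof -
  let ?m = "Min (f ` {..k})"
  have "?m \<in> f ` {..k}" by (intro Min_in) auto
  then obtain j0 where j0: "?m = f j0" "j0 \<in> {..k}" by (rule imageE)
  define j where "j = j0"
  have j: "j \<le> k" "f j = ?m" using j0 by (simp_all add: j_def)
  have mi: "\<And>i. i \<le> k \<Longrightarrow> ?m \<le> f i" by (intro Min_le) auto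
  have "{i. i \<le> k \<and> f i < f j} = {}"
  proof (intro equalityI subsetI)
    fix i assume "i \<in> {i. i \<le> k \<and> f i < f j}"
    then have "i \<le> k" "f i < f j" by blast+
    then show "i \<in> {}" using mi[of i] j(2) by linarith
  qed simp
  then have "card {i. i \<le> k \<and> f i < f j} = 0" by (simp only: card.empty)
  then have "f j = 0" using placingD(2)[OF pf j(1)] by linarith
  then show ?thesis using j(1) by (metis atMost_iff image_eqI)
qed

lemma L2:
  assumes pf: "placing k f" and pg: "placing k g" and le: "ple k f g" and j: "j \<le> k"
  shows "{i. i\<le>k \<and> g i < f j} = {i. i\<le>k \<and> f i < f j} \<and> f j \<in> g ` {..k}"
proof -
  define v where "v = f j"
  define S where "S = {i. i\<le>k \<and> f i < v}"
  define T where "T = {i. i\<le>k \<and> \<not> f i < v}"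
  have cS: "card S = v" using placingD(2)[OF pf j] by (simp add: S_def v_def)
  have jT: "j \<in> T" by (simp add: T_def j v_def)
  have fT: "finite T" by (simp add: T_def)
  have fS: "finite S" by (simp add: S_def)
  define w where "w = Min (g ` T)"
  have "w \<in> g ` T" using fT jT unfolding w_def by (intro Min_in) auto
  then obtain j' where j': "j' \<in> T" "g j' = w" by auto
  have wmin: "\<forall>i\<in>T. w \<le> g i" using fT unfolding w_def by simp
  have j'k: "j' \<le> k" and j'v: "\<not> f j' < v" using j' by (auto simp: T_def)
  have sub: "{i. i\<le>k \<and> g i < w} \<subseteq> S"
  proof (rule subsetI)
    fix i assume "i \<in> {i. i\<le>k \<and> g i < w}"
    then have ik: "i \<le> k" and gi: "g i < w" by auto
    show "i \<in> S"
    proof (rule ccontr)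
      assume "i \<notin> S"
      then have "i \<in> T" using ik by (simp add: S_def T_def)
      then have "w \<le> g i" using wmin by blast
      then show False using gi by simp
    qed
  qed
  have "g j' = card {i. i \<le> k \<and> g i < g j'}" using placingD(2)[OF pg j'k] by simp
  then have cw: "card {i. i\<le>k \<and> g i < w} = w" using j'(2) by simp
  have "w \<le> v" using card_mono[OF fS sub] cw cS by simp
  moreover have "f j' \<le> g j'" using le j'k by (simp add: ple_def)
  then have "v \<le> w" using j'v j'(2) by simp
  ultimately have wv: "w = v" by simp
  have "{i. i\<le>k \<and> g i < w} = S" using card_subset_eq[OF fS sub] cw cS wv by simp
  then have e: "{i. i\<le>k \<and> g i < f j} = {i. i\<le>k \<and> f i < f j}" using wv by (simp add: S_def v_def)
  have "f j = g j'" using wv j'(2) by (simp add: v_def)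
  then have "f j \<in> g ` {..k}" using j'k by simp
  with e show ?thesis by simp
qed

lemma img_sub:
  assumes "placing k f" "placing k g" "ple k f g" shows "f ` {..k} \<subseteq> g ` {..k}"
  using L2[OF assms] by auto

lemma L3:
  assumes pg: "placing k g" and S0: "0 \<in> S" and Ssub: "S \<subseteq> g ` {..k}"
  defines "h \<equiv> \<lambda>i. if i \<le> k then Max {v\<in>S. v \<le> g i} else 0"
  shows "placing k h \<and> ple k h g \<and> h ` {..k} = S \<and>
         (\<forall>i\<le>k. \<forall>v\<in>S. v \<le> g i \<longrightarrow> v \<le> h i)"
proof -
  have fS: "finite S" using Ssub finite_subset by blast
  have hS: "\<And>i. i \<le> k \<Longrightarrow> h i \<in> S \<and> h i \<le> g i"
  proof -
    fix i assume "i \<le> k"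
    have "Max {v\<in>S. v \<le> g i} \<in> {v\<in>S. v \<le> g i}" using fS S0 by (intro Max_in) auto
    then show "h i \<in> S \<and> h i \<le> g i" using \<open>i \<le> k\<close> by (simp add: h_def)
  qed
  have hge: "\<And>i v. i \<le> k \<Longrightarrow> v \<in> S \<Longrightarrow> v \<le> g i \<Longrightarrow> v \<le> h i"
    using fS by (simp add: h_def)
  have lt: "\<And>i v. i \<le> k \<Longrightarrow> v \<in> S \<Longrightarrow> (h i < v) = (g i < v)"
    by (meson hS hge le_less_trans not_le)
  have gk: "\<And>j. j \<le> k \<Longrightarrow> g j \<le> k" by (rule placingD(1)[OF pg])
  have pl: "placing k h"
  proof (rule placingI)
    fix j assume j: "j \<le> k"
    show "h j \<le> k" using hS[OF j] gk[OF j] by simp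
    have e: "{i. i \<le> k \<and> h i < h j} = {i. i \<le> k \<and> g i < h j}"
      using lt hS[OF j] by auto
    have "h j \<in> S" using hS[OF j] by (rule conjunct1)
    then have "h j \<in> g ` {..k}" using Ssub by (rule rev_subsetD)
    then obtain j0 where j0: "j0 \<le> k" "g j0 = h j" by (rule imgE)
    have "card {i. i \<le> k \<and> g i < g j0} = g j0" using placingD(2)[OF pg j0(1)] .
    then show "card {i. i \<le> k \<and> h i < h j} = h j" using e j0 by simp
  next
    fix j :: nat assume "k < j" then show "h j = 0" by (simp add: h_def)
  qed
  have im: "h ` {..k} = S"
  proof
    show "h ` {..k} \<subseteq> S" using hS by auto
    show "S \<subseteq> h ` {..k}"
    proof
      fix v assume v: "v \<in> S"
      have "v \<in> g ` {..k}" using Ssub v by (rule subsetD)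
      then obtain j0 where j0: "j0 \<le> k" "g j0 = v" by (rule imgE)
      have "h j0 = v" using hS[OF j0(1)] hge[OF j0(1) v] j0 by simp
      then show "v \<in> h ` {..k}" using j0(1) by (rule imgI[rotated])
    qed
  qed
  show ?thesis using pl im hS hge by (auto simp: ple_def)
qed

lemma L4aux:
  assumes p1: "placing k h1" and p2: "placing k h2" and pg: "placing k g"
    and l1: "ple k h1 g" and l2: "ple k h2 g" and im: "h1 ` {..k} = h2 ` {..k}"
    and i: "i \<le> k"
  shows "\<not> h1 i < h2 i"
proof
  assume a: "h1 i < h2 i"
  have "h2 i \<in> h1 ` {..k}" using im i by auto
  then obtain j where j: "j \<le> k" "h1 j = h2 i" by (rule imgE)
  have "{x. x\<le>k \<and> g x < h1 j} = {x. x\<le>k \<and> h1 x < h1 j}" using L2[OF p1 pg l1 j(1)] by simp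
  moreover have "i \<in> {x. x\<le>k \<and> h1 x < h1 j}" using a i j by simp
  ultimately have "i \<in> {x. x\<le>k \<and> g x < h1 j}" by (simp only:)
  then have "g i < h2 i" using j by simp
  moreover have "h2 i \<le> g i" using l2 i by (simp add: ple_def)
  ultimately show False by simp
qed

lemma L4:
  assumes p1: "placing k h1" and p2: "placing k h2" and pg: "placing k g"
    and l1: "ple k h1 g" and l2: "ple k h2 g" and im: "h1 ` {..k} = h2 ` {..k}"
  shows "h1 = h2"
proof
  fix i show "h1 i = h2 i"
  proof (cases "i \<le> k")
    case True
    then show ?thesis using L4aux[OF p1 p2 pg l1 l2 im True] L4aux[OF p2 p1 pg l2 l1 im[symmetric] True]
      by simp
  next
    case False then show ?thesis using placingD2[OF p1] placingD2[OF p2] by simp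
  qed
qed


lemma height_eq: "height k f i = (if 1 \<le> i \<and> i \<le> k \<and> i \<in> f ` {..k} then 1 else 0)"
  by (auto simp: height_def)

lemma mono_height:
  assumes "(f, g) \<in> Sigma_k k" shows "height k f i \<le> height k g i"
  using assms img_sub[of k f g] by (auto simp: Sigma_k_def Pk_def height_eq)

lemma finPk: "finite (Pk k)"
proof -
  have "Pk k \<subseteq> {f. \<forall>x. (x \<in> {..k} \<longrightarrow> f x \<in> {..k}) \<and> (x \<notin> {..k} \<longrightarrow> f x = 0)}"
  proof
    fix f assume "f \<in> Pk k"
    then have pf: "placing k f" by (simp add: Pk_def)
    show "f \<in> {f. \<forall>x. (x \<in> {..k} \<longrightarrow> f x \<in> {..k}) \<and> (x \<notin> {..k} \<longrightarrow> f x = 0)}"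
      using placingD(1)[OF pf] placingD2[OF pf] by (simp add: not_le)
  qed
  then show ?thesis using finite_set_of_finite_funs[of "{..k}" "{..k}" 0] finite_subset by blast
qed

lemma factor:
  assumes l: "(f, g) \<in> Sigma_k k" and nm: "nvec k m" and nn: "nvec k n"
    and dl: "sig_d k (f, g) = (\<lambda>i. m i + n i)"
  shows "\<exists>!p. fst p \<in> Sigma_k k \<and> snd p \<in> Sigma_k k \<and> sig_s (fst p) = sig_r (snd p) \<and>
                 sig_d k (fst p) = m \<and> sig_d k (snd p) = n \<and> sig_comp (fst p) (snd p) = (f, g)"
proof -
  have pf: "placing k f" and pg: "placing k g" and fg: "ple k f g" using l by (auto simp: Sigma_k_def Pk_def)
  have imfg: "f ` {..k} \<subseteq> g ` {..k}" using img_sub[OF pf pg fg] .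
  have di: "\<And>i. m i + n i = height k g i - height k f i"
    using dl by (auto simp: sig_d_def fun_eq_iff)
  have mout: "\<And>i. \<not> (1 \<le> i \<and> i \<le> k) \<Longrightarrow> m i = 0 \<and> n i = 0"
  proof -
    fix i assume "\<not> (1 \<le> i \<and> i \<le> k)"
    then have "i < 1 \<or> k < i" by linarith
    moreover have "(i < 1 \<or> k < i) \<longrightarrow> m i = 0" using nm unfolding nvec_def by (rule spec)
    moreover have "(i < 1 \<or> k < i) \<longrightarrow> n i = 0" using nn unfolding nvec_def by (rule spec)
    ultimately show "m i = 0 \<and> n i = 0" by simp
  qed
  define S where "S = f ` {..k} \<union> {i. m i > 0}"
  have S0: "0 \<in> S" using L1[OF pf] by (simp add: S_def)
  have Ssub: "S \<subseteq> g ` {..k}"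
  proof
    fix x assume "x \<in> S"
    then consider "x \<in> f ` {..k}" | "m x > 0" by (auto simp: S_def)
    then show "x \<in> g ` {..k}"
    proof cases
      case 1 then show ?thesis using imfg by auto
    next
      case 2
      then have "1 \<le> x \<and> x \<le> k" using mout by force
      moreover have "height k g x > 0" using di[of x] 2 by simp
      ultimately show ?thesis by (auto simp: height_eq split: if_splits)
    qed
  qed
  define h where "h \<equiv> \<lambda>i. if i \<le> k then Max {v\<in>S. v \<le> g i} else 0"
  have L: "placing k h \<and> ple k h g \<and> h ` {..k} = S \<and> (\<forall>i\<le>k. \<forall>v\<in>S. v \<le> g i \<longrightarrow> v \<le> h i)"
    using L3[OF pg S0 Ssub] unfolding h_def by blast
  have ph: "placing k h" and hg: "ple k h g" and imh: "h ` {..k} = S" using L by auto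
  have fh: "ple k f h" unfolding ple_def
  proof (intro allI impI)
    fix i assume i: "i \<le> k"
    have "f i \<in> S" using i by (auto simp: S_def)
    moreover have "f i \<le> g i" using fg i by (simp add: ple_def)
    ultimately show "f i \<le> h i" using L i by blast
  qed
  have key: "\<And>i. (height k h i - height k f i = m i) \<and> (height k g i - height k h i = n i)"
  proof -
    fix i
    show "(height k h i - height k f i = m i) \<and> (height k g i - height k h i = n i)"
    proof (cases "1 \<le> i \<and> i \<le> k")
      case True
      have hS: "(i \<in> h ` {..k}) = (i \<in> f ` {..k} \<or> m i > 0)" using imh by (auto simp: S_def)
      have FG: "i \<in> f ` {..k} \<Longrightarrow> i \<in> g ` {..k}" using imfg by auto
      have HG: "i \<in> h ` {..k} \<Longrightarrow> i \<in> g ` {..k}" using imh Ssub by auto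
      show ?thesis using di[of i] True hS FG HG by (auto simp: height_eq)
    next
      case False then show ?thesis using mout[OF False] by (auto simp: height_eq)
    qed
  qed
  let ?p = "((f, h), (h, g))"
  show ?thesis
  proof (rule ex1I[of _ ?p])
    show "fst ?p \<in> Sigma_k k \<and> snd ?p \<in> Sigma_k k \<and> sig_s (fst ?p) = sig_r (snd ?p) \<and>
          sig_d k (fst ?p) = m \<and> sig_d k (snd ?p) = n \<and> sig_comp (fst ?p) (snd ?p) = (f, g)"
    proof -
      have d1: "sig_d k (f, h) = m" using key by (simp add: sig_d_def fun_eq_iff)
      have d2: "sig_d k (h, g) = n" using key by (simp add: sig_d_def fun_eq_iff)
      have "(f, h) \<in> Sigma_k k" "(h, g) \<in> Sigma_k k" using pf pg ph fh hg by (simp_all add: Sigma_k_def Pk_def)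
      then show ?thesis by (simp add: d1 d2 sig_s_def sig_r_def sig_comp_def)
    qed
  next
    fix p assume a: "fst p \<in> Sigma_k k \<and> snd p \<in> Sigma_k k \<and> sig_s (fst p) = sig_r (snd p) \<and>
          sig_d k (fst p) = m \<and> sig_d k (snd p) = n \<and> sig_comp (fst p) (snd p) = (f, g)"
    obtain a1 b c e where p: "p = ((a1, b), (c, e))" by (metis prod.collapse)
    have e1: "c = b" "a1 = f" "e = g" using a p by (auto simp: sig_s_def sig_r_def sig_comp_def)
    have s1: "(f, b) \<in> Sigma_k k" and s2: "(b, g) \<in> Sigma_k k" using a p e1 by auto
    have pb: "placing k b" and fb: "ple k f b" and bg: "ple k b g" using s1 s2 by (auto simp: Sigma_k_def Pk_def)
    have dfb: "\<And>i. height k b i - height k f i = m i" using a p e1 by (auto simp: sig_d_def fun_eq_iff)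
    have imfb: "f ` {..k} \<subseteq> b ` {..k}" using img_sub[OF pf pb fb] .
    have bk: "\<And>x. x \<in> b ` {..k} \<Longrightarrow> x \<le> k" using placingD(1)[OF pb] by auto
    have Sk: "\<And>x. x \<in> S \<Longrightarrow> x \<le> k" using Ssub placingD(1)[OF pg] by auto
    have imb: "b ` {..k} = S"
    proof (intro set_eqI iffI)
      fix x assume x: "x \<in> b ` {..k}"
      show "x \<in> S"
      proof (cases "x = 0")
        case True then show ?thesis using S0 by simp
      next
        case False
        then have "1 \<le> x \<and> x \<le> k" using bk[OF x] by simp
        show ?thesis
        proof (cases "x \<in> f ` {..k}")
          case True then show ?thesis by (simp add: S_def)
        next
          case nf: False
          have "height k b x = 1" using \<open>1 \<le> x \<and> x \<le> k\<close> x by (simp add: height_eq)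
          moreover have "height k f x = 0" using nf by (simp add: height_eq)
          ultimately have "m x = 1" using dfb[of x] by simp
          then show ?thesis by (simp add: S_def)
        qed
      qed
    next
      fix x assume x: "x \<in> S"
      show "x \<in> b ` {..k}"
      proof (cases "x = 0")
        case True then show ?thesis using L1[OF pb] by simp
      next
        case False
        then have r: "1 \<le> x \<and> x \<le> k" using Sk[OF x] by simp
        show ?thesis
        proof (cases "x \<in> f ` {..k}")
          case True then show ?thesis using imfb by auto
        next
          case False
          then have "m x > 0" using x by (simp add: S_def)
          moreover have "height k f x = 0" using False by (simp add: height_eq)
          ultimately have "height k b x \<noteq> 0" using dfb[of x] by simp
          then show ?thesis by (simp add: height_eq split: if_splits)
        qed
      qed
    qed
    have "b = h" using L4[OF pb ph pg bg hg] imb imh by simp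
    then show "p = ?p" using p e1 by simp
  qed
qed

lemma idpl: "placing k (\<lambda>j. if j \<le> k then j else 0)"
proof -
  have "\<And>j. j \<le> k \<Longrightarrow> {i. i \<le> k \<and> (if i \<le> k then i else 0) < j} = {..<j}" by auto
  then show ?thesis by (intro placingI) auto
qed

theorem proposition5p4:
  fixes k :: nat
  assumes "1 \<le> k"
  shows "(\<forall>(f, g)\<in>Sigma_k k. \<forall>i. height k f i \<le> height k g i)
    \<and> is_k_graph k (Sigma_k k) sig_r sig_s sig_comp (sig_d k)
    \<and> sig_d k ` Sigma_k k = {n. nvec k n \<and> (\<forall>i. 1 \<le> i \<and> i \<le> k \<longrightarrow> n i \<le> 1)}"
proof (intro conjI)
  show "\<forall>(f, g)\<in>Sigma_k k. \<forall>i. height k f i \<le> height k g i" using mono_height by blast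
  show "is_k_graph k (Sigma_k k) sig_r sig_s sig_comp (sig_d k)"
    unfolding is_k_graph_def
  proof (intro conjI)
    have "Sigma_k k \<subseteq> Pk k \<times> Pk k" by (auto simp: Sigma_k_def)
    then show "countable (Sigma_k k)" using finPk by (meson countable_finite finite_SigmaI finite_subset)
    show "is_category (Sigma_k k) sig_r sig_s sig_comp"
      unfolding is_category_def
    proof (intro conjI ballI impI)
      fix a assume a: "a \<in> Sigma_k k"
      obtain f g where af: "a = (f, g)" by fastforce
      have "placing k f" "placing k g" using a af by (auto simp: Sigma_k_def Pk_def)
      then have "(f, f) \<in> Sigma_k k" "(g, g) \<in> Sigma_k k" by (auto simp: Sigma_k_def Pk_def ple_def)
      then show "sig_r a \<in> Sigma_k k" "sig_s a \<in> Sigma_k k" using af by (auto simp: sig_r_def sig_s_def)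
      show "sig_r (sig_r a) = sig_r a" "sig_s (sig_r a) = sig_r a" "sig_r (sig_s a) = sig_s a"
        "sig_s (sig_s a) = sig_s a" "sig_comp (sig_r a) a = a" "sig_comp a (sig_s a) = a"
        by (simp_all add: af sig_r_def sig_s_def sig_comp_def)
    next
      fix a b assume a: "a \<in> Sigma_k k" and b: "b \<in> Sigma_k k" and s: "sig_s a = sig_r b"
      obtain f h where af: "a = (f, h)" by fastforce
      obtain h' g where bf: "b = (h', g)" by fastforce
      have hh: "h' = h" using s af bf by (simp add: sig_s_def sig_r_def)
      have "ple k f h" "ple k h g" "f \<in> Pk k" "g \<in> Pk k" using a b af bf hh by (auto simp: Sigma_k_def)
      then have "(f, g) \<in> Sigma_k k" unfolding Sigma_k_def ple_def using order_trans by blast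
      then show "sig_comp a b \<in> Sigma_k k" "sig_r (sig_comp a b) = sig_r a" "sig_s (sig_comp a b) = sig_s b"
        by (simp_all add: af bf sig_comp_def sig_r_def sig_s_def)
    next
      fix a b c assume "a \<in> Sigma_k k" "b \<in> Sigma_k k" "c \<in> Sigma_k k"
      show "sig_comp (sig_comp a b) c = sig_comp a (sig_comp b c)" by (simp add: sig_comp_def)
    qed
    show "\<forall>a\<in>Sigma_k k. nvec k (sig_d k a)"
      by (auto simp: nvec_def sig_d_def height_def)
    show "\<forall>a\<in>Sigma_k k. sig_r a = a \<longrightarrow> sig_d k a = (\<lambda>i. 0)"
    proof (intro ballI impI)
      fix a :: "(nat \<Rightarrow> nat) \<times> (nat \<Rightarrow> nat)" assume "sig_r a = a"
      then have "snd a = fst a" by (metis sig_r_def snd_conv)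
      then show "sig_d k a = (\<lambda>i. 0)" by (simp add: sig_d_def)
    qed
    show "\<forall>a\<in>Sigma_k k. \<forall>b\<in>Sigma_k k. sig_s a = sig_r b \<longrightarrow>
        sig_d k (sig_comp a b) = (\<lambda>i. sig_d k a i + sig_d k b i)"
    proof (intro ballI impI)
      fix a b assume a: "a \<in> Sigma_k k" and b: "b \<in> Sigma_k k" and s: "sig_s a = sig_r b"
      obtain f h where af: "a = (f, h)" by fastforce
      obtain h' g where bf: "b = (h', g)" by fastforce
      have "h' = h" using s af bf by (simp add: sig_s_def sig_r_def)
      then have "\<And>i. height k f i \<le> height k h i" "\<And>i. height k h i \<le> height k g i"
        using mono_height a b af bf by auto
      then show "sig_d k (sig_comp a b) = (\<lambda>i. sig_d k a i + sig_d k b i)"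
        using af bf \<open>h' = h\<close> by (auto simp: sig_d_def sig_comp_def fun_eq_iff)
    qed
    show "\<forall>m n. nvec k m \<longrightarrow> nvec k n \<longrightarrow>
        (\<forall>l\<in>Sigma_k k. sig_d k l = (\<lambda>i. m i + n i) \<longrightarrow>
           (\<exists>!p. fst p \<in> Sigma_k k \<and> snd p \<in> Sigma_k k \<and> sig_s (fst p) = sig_r (snd p) \<and>
                 sig_d k (fst p) = m \<and> sig_d k (snd p) = n \<and> sig_comp (fst p) (snd p) = l))"
    proof (intro allI impI ballI)
      fix m n l assume nm: "nvec k m" and nn: "nvec k n" and l: "l \<in> Sigma_k k"
        and dl: "sig_d k l = (\<lambda>i. m i + n i)"
      obtain f g where lf: "l = (f, g)" by fastforce
      show "\<exists>!p. fst p \<in> Sigma_k k \<and> snd p \<in> Sigma_k k \<and> sig_s (fst p) = sig_r (snd p) \<and>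
                 sig_d k (fst p) = m \<and> sig_d k (snd p) = n \<and> sig_comp (fst p) (snd p) = l"
        using factor[OF _ nm nn, of f g] l dl lf by simp
    qed
  qed
  show "sig_d k ` Sigma_k k = {n. nvec k n \<and> (\<forall>i. 1 \<le> i \<and> i \<le> k \<longrightarrow> n i \<le> 1)}"
  proof (intro set_eqI iffI)
    fix n assume "n \<in> sig_d k ` Sigma_k k"
    then show "n \<in> {n. nvec k n \<and> (\<forall>i. 1 \<le> i \<and> i \<le> k \<longrightarrow> n i \<le> 1)}"
      by (auto simp: nvec_def sig_d_def height_def)
  next
    fix n assume "n \<in> {n. nvec k n \<and> (\<forall>i. 1 \<le> i \<and> i \<le> k \<longrightarrow> n i \<le> 1)}"
    then have nv: "nvec k n" and n1: "\<And>i. 1 \<le> i \<Longrightarrow> i \<le> k \<Longrightarrow> n i \<le> 1" by auto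
    define g where "g = (\<lambda>j::nat. if j \<le> k then j else 0)"
    have pg: "placing k g" using idpl by (simp add: g_def)
    have img: "g ` {..k} = {..k}" by (auto simp: g_def image_def)
    define S where "S = {0} \<union> {i. 1 \<le> i \<and> i \<le> k \<and> n i = 0}"
    have S0: "0 \<in> S" and Ssub: "S \<subseteq> g ` {..k}" using img by (auto simp: S_def)
    define h where "h \<equiv> \<lambda>i. if i \<le> k then Max {v\<in>S. v \<le> g i} else 0"
    have L: "placing k h \<and> ple k h g \<and> h ` {..k} = S \<and> (\<forall>i\<le>k. \<forall>v\<in>S. v \<le> g i \<longrightarrow> v \<le> h i)"
      using L3[OF pg S0 Ssub] unfolding h_def by blast
    have mem: "(h, g) \<in> Sigma_k k" using L pg by (auto simp: Sigma_k_def Pk_def)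
    have "sig_d k (h, g) = n"
    proof
      fix i
      show "sig_d k (h, g) i = n i"
      proof (cases "1 \<le> i \<and> i \<le> k")
        case True
        then show ?thesis using n1[of i] L img by (auto simp: sig_d_def height_eq S_def)
      next
        case False
        then have ik: "i < 1 \<or> k < i" by linarith
        moreover have "(i < 1 \<or> k < i) \<longrightarrow> n i = 0" using nv unfolding nvec_def by (rule spec)
        ultimately have "n i = 0" by simp
        moreover have "height k h i = 0" "height k g i = 0" using ik by (auto simp: height_def)
        ultimately show ?thesis by (simp add: sig_d_def)
      qed
    qed
    then show "n \<in> sig_d k ` Sigma_k k" using mem by force
  qed
qed

end
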